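(* Let $\sqrt{2} = (1.b_1 b_2 b_3 \cdots)_2$ be the binary expansion of $\sqrt 2$. For integers $n \geq 2$, let $L_n(x) = \left\lfloor \frac{x(2^n - x)}{2^{n-2}} \right\rfloor$ for $x \in X_n = \{1, 2, \dots, 2^n - 1\}$, and call $n$ undesirable if there exists $x \in X_n$ with $L_n(x) = 2^{n-1}$. Then an integer $n \geq 2$ is undesirable if $b_{n-1} b_n = 00$, or $b_{n-1} b_n b_{n+1} b_{n+2} = 0100$, or $b_{n-1} b_n b_{n+1} b_{n+2} b_{n+3} = 01010$. *)

theory Defs
  imports Complex_Main
begin

text \<open>k-th binary digit after the point of sqrt 2 = (1.b1 b2 b3 ...)_2, for k >= 1.\<close>
definition sqrt2_bit :: "nat \<Rightarrow> int" where
  "sqrt2_bit k = \<lfloor>2 ^ k * sqrt 2\<rfloor> mod 2"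

definition L :: "nat \<Rightarrow> int \<Rightarrow> int" where
  "L n x = \<lfloor>real_of_int (x * (2 ^ n - x)) / 2 ^ (n - 2)\<rfloor>"

definition X :: "nat \<Rightarrow> int set" where
  "X n = {1 .. 2 ^ n - 1}"

definition undesirable :: "nat \<Rightarrow> bool" where
  "undesirable n \<longleftrightarrow> (\<exists>x \<in> X n. L n x = 2 ^ (n - 1))"

end

theory Submission
  imports Defs
begin

lemma bit01: "sqrt2_bit k = 0 \<or> sqrt2_bit k = 1"
  unfolding sqrt2_bit_def by presburger

lemma mstep: "\<lfloor>2^(Suc k) * sqrt 2\<rfloor> = 2 * \<lfloor>2^k * sqrt 2\<rfloor> + sqrt2_bit (Suc k)"
proof -
  define t :: real where "t = 2^k * sqrt 2"
  have e: "2^(Suc k) * sqrt 2 = 2 * t" unfolding t_def by simp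
  have a: "2 * \<lfloor>t\<rfloor> \<le> \<lfloor>2*t\<rfloor>"
    by (metis le_floor_iff mult_le_cancel_left_pos of_int_floor_le of_int_mult of_int_numeral zero_less_numeral)
  have "real_of_int \<lfloor>2*t\<rfloor> < 2 * real_of_int \<lfloor>t\<rfloor> + 2"
    using of_int_floor_le[of "2*t"] real_of_int_floor_add_one_gt[of t] by linarith
  hence b: "\<lfloor>2*t\<rfloor> < 2 * \<lfloor>t\<rfloor> + 2" by linarith
  have c: "sqrt2_bit (Suc k) = \<lfloor>2*t\<rfloor> mod 2" unfolding sqrt2_bit_def e by simp
  show ?thesis unfolding e c t_def[symmetric] using a b by presburger
qed

theorem proposition2p4:
  fixes n :: nat
  assumes "n \<ge> 2"
    and "(sqrt2_bit (n - 1) = 0 \<and> sqrt2_bit n = 0)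
      \<or> (sqrt2_bit (n - 1) = 0 \<and> sqrt2_bit n = 1 \<and> sqrt2_bit (n + 1) = 0 \<and> sqrt2_bit (n + 2) = 0)
      \<or> (sqrt2_bit (n - 1) = 0 \<and> sqrt2_bit n = 1 \<and> sqrt2_bit (n + 1) = 0 \<and> sqrt2_bit (n + 2) = 1
          \<and> sqrt2_bit (n + 3) = 0)"
  shows "undesirable n"
proof -
  obtain k where nk: "n = k + 2" using assms(1) by (metis add.commute le_add_diff_inverse)
  define m where "m j = \<lfloor>2^j * sqrt 2\<rfloor>" for j
  have ms: "m (Suc j) = 2 * m j + sqrt2_bit (Suc j)" for j unfolding m_def by (rule mstep)
  define y where "y = m k"
  define b1 where "b1 = sqrt2_bit (k+1)"
  define b2 where "b2 = sqrt2_bit (k+2)"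
  define b3 where "b3 = sqrt2_bit (k+3)"
  define b4 where "b4 = sqrt2_bit (k+4)"
  define b5 where "b5 = sqrt2_bit (k+5)"
  have "m (k+5) = 32 * y + 16 * b1 + 8 * b2 + 4 * b3 + 2 * b4 + b5"
    using ms[of k] ms[of "k+1"] ms[of "k+2"] ms[of "k+3"] ms[of "k+4"]
    unfolding y_def b1_def b2_def b3_def b4_def b5_def
    by (simp add: numeral_eq_Suc)
  moreover have "(b1 = 0 \<and> b2 = 0) \<or> (b1 = 0 \<and> b2 = 1 \<and> b3 = 0 \<and> b4 = 0)
     \<or> (b1 = 0 \<and> b2 = 1 \<and> b3 = 0 \<and> b4 = 1 \<and> b5 = 0)"
    using assms(2) unfolding b1_def b2_def b3_def b4_def b5_def nk
    by (simp add: numeral_eq_Suc)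
  moreover have "b3 = 0 \<or> b3 = 1" "b4 = 0 \<or> b4 = 1" "b5 = 0 \<or> b5 = 1"
    unfolding b3_def b4_def b5_def by (rule bit01)+
  ultimately have r: "m (k+5) \<le> 32 * y + 10" by linarith
  define P :: real where "P = 2^k"
  define s where "s = P * sqrt 2"
  have Ppos: "P > 0" unfolding P_def by simp
  have "2^(k+5) * sqrt 2 < real_of_int (m (k+5)) + 1" unfolding m_def by linarith
  also have "\<dots> \<le> 32 * real_of_int y + 11" using r by linarith
  finally have "32 * s < 32 * real_of_int y + 11" unfolding s_def P_def by (simp add: power_add)
  hence f1: "s - y < 11/32" by simp
  have f0: "real_of_int y \<le> s" unfolding y_def m_def s_def P_def by simp
  have s2: "s^2 = 2 * P^2" unfolding s_def by (simp add: power_mult_distrib)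
  have spos: "s > 0" unfolding s_def using Ppos by simp
  have y0: "0 \<le> y" unfolding y_def m_def by simp
  have sq2: "sqrt 2 < 16/11"
    by (rule real_less_lsqrt) (auto simp: power2_eq_square)
  have "s < 2 * P" unfolding s_def using Ppos sq2 by simp
  hence ylt: "real_of_int y < 2 * P" using f0 by linarith
  have ysq_le: "(real_of_int y)^2 \<le> 2 * P^2"
    using power_mono[OF f0, of 2] y0 s2 by simp
  define f where "f = s - y"
  have "(real_of_int y)^2 = s^2 - 2*s*f + f^2" unfolding f_def by (simp add: power2_eq_square algebra_simps)
  moreover have "2*s*f < 2*s*(11/32)" using f1 spos unfolding f_def by simp
  moreover have "2*s*(11/32) < P" unfolding s_def using Ppos sq2 by simp
  moreover have "f^2 \<ge> 0" by simp
  ultimately have ysq_gt: "(real_of_int y)^2 > 2*P^2 - P" using s2 by linarith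
  define Q :: int where "Q = 2^k"
  have PQ: "P = real_of_int Q" unfolding P_def Q_def by simp
  have yQ1: "y < 2*Q" using ylt PQ by linarith
  have "real_of_int (y^2) \<le> real_of_int (2*Q^2)" using ysq_le PQ by simp
  hence yQ2: "y^2 \<le> 2*Q^2" by (simp only: of_int_le_iff)
  have "real_of_int (y^2) > real_of_int (2*Q^2 - Q)" using ysq_gt PQ by simp
  hence yQ3: "y^2 > 2*Q^2 - Q" by (simp only: of_int_less_iff)
  have Qpos: "Q > 0" unfolding Q_def by simp
  define x where "x = 2*Q - y"
  have pn: "(2::int)^n = 4*Q" "(2::int)^(n-1) = 2*Q" "n - 2 = k" unfolding nk Q_def
    by (simp_all add: power_add)
  have xX: "x \<in> X n" unfolding X_def x_def pn using yQ1 y0 Qpos by auto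
  have xx: "x * (2^n - x) = 4*Q^2 - y^2" unfolding x_def pn by (simp add: power2_eq_square algebra_simps)
  have "L n x = 2*Q"
    unfolding L_def xx pn(3)
  proof (rule floor_unique)
    have q: "(2::real)^k = real_of_int Q" unfolding Q_def by simp
    have Qr: "real_of_int Q > 0" using Qpos by simp
    have i1: "2*Q*Q \<le> 4 * Q\<^sup>2 - y\<^sup>2" using yQ2 unfolding power2_eq_square by linarith
    have i2: "4 * Q\<^sup>2 - y\<^sup>2 < (2*Q+1)*Q" using yQ3 unfolding power2_eq_square by (simp add: distrib_right)
    have "real_of_int (2*Q) * real_of_int Q \<le> real_of_int (4 * Q\<^sup>2 - y\<^sup>2)"
      using i1 by (simp only: of_int_mult[symmetric] of_int_le_iff)
    thus "real_of_int (2*Q) \<le> real_of_int (4 * Q\<^sup>2 - y\<^sup>2) / 2 ^ k"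
      unfolding q using Qr by (simp only: pos_le_divide_eq)
    have "real_of_int (4 * Q\<^sup>2 - y\<^sup>2) < real_of_int ((2*Q+1)*Q)"
      using i2 by (simp only: of_int_less_iff)
    hence "real_of_int (4 * Q\<^sup>2 - y\<^sup>2) < (real_of_int (2*Q) + 1) * real_of_int Q"
      by simp
    thus "real_of_int (4 * Q\<^sup>2 - y\<^sup>2) / 2 ^ k < real_of_int (2*Q) + 1"
      unfolding q using Qr by (simp only: pos_divide_less_eq)
  qed
  thus ?thesis unfolding undesirable_def pn(2) using xX by blast
qed

end
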